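(* Let $p,r$ be positive integers and $s=p+2r$. Let $\Phi:U_{ps}(\mathbb{R})\to\mathbb{C}^{r\times p}$ be the map $\Phi(X)=WA^{-1}$, where for $X=(X_0;X_1;X_2;X_3)$ (blocks of $p,p,r,r$ rows) $A=X_0-X_1$ and $W=X_2+iX_3$. Then the complex valued components of $\Phi$ form an orthogonal harmonic family of $\mathbf{GL}_p(\mathbb{R})$-invariant functions on $U_{ps}(\mathbb{R})$, equipped with the semi-Euclidean metric.
   Context: $U_{ps}(\mathbb{R})=\{X\in\mathbb{R}^{(p+s)\times p}: -X_0^tX_0+X_1^tX_1+X_2^tX_2+X_3^tX_3 \text{ is negative definite}\}$; on it $A$ is invertible. $\mathbf{GL}_p(\mathbb{R})$ acts by right multiplication. The semi-Euclidean metric is $(X,Y)=\mathrm{trace}(X^t\mathrm{diag}(-I_p,I_s)Y)$. For a semi-Riemannian manifold $(M,g)$ and complex functions $\phi,\psi$, $\tau(\phi)$ is the Laplace–Beltrami operator (extended complex-linearly) and $\kappa(\phi,\psi)=g(\mathrm{grad}\,\phi,\mathrm{grad}\,\psi)$ with $g$ extended complex-bilinearly. A set $\Omega$ of complex functions is an orthogonal harmonic family if $\tau(\phi)=0$ and $\kappa(\phi,\psi)=0$ for all $\phi,\psi\in\Omega$. *)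

theory Defs
  imports "HOL-Analysis.Analysis"
begin

text \<open>Matrices X in R^((p+s) x p), s = p + 2r, are modelled as real^'p^'row with
  row index type 'row = ('p + 'p) + ('r + 'r): the row blocks X0, X1, X2, X3 are
  the rows Inl (Inl i), Inl (Inr i), Inr (Inl k), Inr (Inr k).  p = CARD('p), r = CARD('r).\<close>

type_synonym ('p, 'r) rowidx = "('p + 'p) + ('r + 'r)"
type_synonym ('p, 'r) mat = "real ^ 'p ^ ('p, 'r) rowidx"

definition blk0 :: "('p::finite, 'r::finite) mat \<Rightarrow> real ^ 'p ^ 'p" where
  "blk0 X = (\<chi> i j. X $ Inl (Inl i) $ j)"
definition blk1 :: "('p::finite, 'r::finite) mat \<Rightarrow> real ^ 'p ^ 'p" where
  "blk1 X = (\<chi> i j. X $ Inl (Inr i) $ j)"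
definition blk2 :: "('p::finite, 'r::finite) mat \<Rightarrow> real ^ 'p ^ 'r" where
  "blk2 X = (\<chi> k j. X $ Inr (Inl k) $ j)"
definition blk3 :: "('p::finite, 'r::finite) mat \<Rightarrow> real ^ 'p ^ 'r" where
  "blk3 X = (\<chi> k j. X $ Inr (Inr k) $ j)"

definition neg_def :: "real ^ 'n ^ 'n \<Rightarrow> bool" where
  "neg_def M \<longleftrightarrow> (\<forall>v::real^'n. v \<noteq> 0 \<longrightarrow> v \<bullet> (M *v v) < 0)"

definition U_ps :: "('p::finite, 'r::finite) mat set" where
  "U_ps = {X. neg_def (- (transpose (blk0 X) ** blk0 X) + transpose (blk1 X) ** blk1 X
                       + transpose (blk2 X) ** blk2 X + transpose (blk3 X) ** blk3 X)}"

definition Phi :: "('p::finite, 'r::finite) mat \<Rightarrow> 'r \<Rightarrow> 'p \<Rightarrow> complex" where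
  "Phi X k l = (let A = blk0 X - blk1 X; Ai = matrix_inv A in
     (\<Sum>m\<in>UNIV. (complex_of_real (blk2 X $ k $ m) + \<i> * complex_of_real (blk3 X $ k $ m))
                 * complex_of_real (Ai $ m $ l)))"

text \<open>Semi-Euclidean metric (X,Y) = trace(X^t diag(-I_p, I_s) Y): the coordinate
  X_{a j} has sign -1 if row a lies in the first block, +1 otherwise.  The
  coordinates X_{a j} are orthonormal for this flat metric.\<close>
definition sgn_row :: "('p, 'r) rowidx \<Rightarrow> real" where
  "sgn_row a = (case a of Inl (Inl _) \<Rightarrow> -1 | _ \<Rightarrow> 1)"

definition semi_eucl :: "('p::finite, 'r::finite) mat \<Rightarrow> ('p, 'r) mat \<Rightarrow> real" where
  "semi_eucl X Y = (\<Sum>a\<in>UNIV. \<Sum>j\<in>UNIV. sgn_row a * X $ a $ j * Y $ a $ j)"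

definition unitmat :: "'m \<Rightarrow> 'c \<Rightarrow> real ^ 'c ^ 'm" where
  "unitmat a j = (\<chi> b c. if b = a \<and> c = j then 1 else 0)"

definition pd :: "'m::finite \<Rightarrow> 'c::finite \<Rightarrow> (real ^ 'c ^ 'm \<Rightarrow> complex) \<Rightarrow> real ^ 'c ^ 'm \<Rightarrow> complex" where
  "pd a j f X = vector_derivative (\<lambda>t. f (X + t *\<^sub>R unitmat a j)) (at 0)"

definition tau :: "(('p::finite, 'r::finite) mat \<Rightarrow> complex) \<Rightarrow> ('p, 'r) mat \<Rightarrow> complex" where
  "tau f X = (\<Sum>a\<in>UNIV. \<Sum>j\<in>UNIV. complex_of_real (sgn_row a) * pd a j (pd a j f) X)"

definition kappa :: "(('p::finite, 'r::finite) mat \<Rightarrow> complex) \<Rightarrow> (('p, 'r) mat \<Rightarrow> complex)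
                      \<Rightarrow> ('p, 'r) mat \<Rightarrow> complex" where
  "kappa f g X = (\<Sum>a\<in>UNIV. \<Sum>j\<in>UNIV. complex_of_real (sgn_row a) * pd a j f X * pd a j g X)"

definition orth_harm_family :: "('p::finite, 'r::finite) mat set \<Rightarrow> (('p, 'r) mat \<Rightarrow> complex) set \<Rightarrow> bool" where
  "orth_harm_family U \<Omega> \<longleftrightarrow>
     (\<forall>f\<in>\<Omega>. \<forall>X\<in>U. f differentiable (at X) \<and> (\<forall>a j. pd a j f differentiable (at X))) \<and>
     (\<forall>f\<in>\<Omega>. \<forall>X\<in>U. tau f X = 0) \<and>
     (\<forall>f\<in>\<Omega>. \<forall>g\<in>\<Omega>. \<forall>X\<in>U. kappa f g X = 0)"

definition GLp_invariant :: "('p::finite, 'r::finite) mat set \<Rightarrow> (('p, 'r) mat \<Rightarrow> complex) \<Rightarrow> bool" where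
  "GLp_invariant U f \<longleftrightarrow> (\<forall>X\<in>U. \<forall>g::real^'p^'p. invertible g \<longrightarrow> f (X ** g) = f X)"

end

theory Submission
  imports Defs
begin

lemma matrix_inv_props:
  fixes A :: "real^'n^'n"
  assumes "invertible A"
  shows "A ** matrix_inv A = mat 1" "matrix_inv A ** A = mat 1"
proof -
  have "\<exists>A'. A ** A' = mat 1 \<and> A' ** A = mat 1" using assms by (simp add: invertible_def)
  then have "A ** matrix_inv A = mat 1 \<and> matrix_inv A ** A = mat 1"
    unfolding matrix_inv_def by (rule someI_ex)
  then show "A ** matrix_inv A = mat 1" "matrix_inv A ** A = mat 1" by auto
qed

lemma matrix_inv_unique:
  fixes A :: "real^'n^'n"
  assumes "A ** B = mat 1" "B ** A = mat 1"
  shows "matrix_inv A = B"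
proof -
  have inv: "invertible A" using assms by (auto simp: invertible_def)
  have "matrix_inv A = matrix_inv A ** (A ** B)" by (simp add: assms)
  also have "\<dots> = (matrix_inv A ** A) ** B" by (simp add: matrix_mul_assoc)
  also have "\<dots> = B" by (simp add: matrix_inv_props[OF inv])
  finally show ?thesis .
qed

lemma matrix_inv_cramer:
  fixes M :: "real^'n^'n"
  assumes "det M \<noteq> 0"
  shows "matrix_inv M $ m $ l = det (\<chi> i j. if j = m then axis l 1 $ i else M$i$j) / det M"
proof -
  have inv: "invertible M" using assms by (simp add: invertible_det_nz)
  define x where "x = matrix_inv M *v axis l 1"
  have "M *v x = axis l 1"
    unfolding x_def by (simp add: matrix_vector_mul_assoc matrix_inv_props[OF inv])
  then have "x = (\<chi> k. det(\<chi> i j. if j=k then axis l 1$i else M$i$j) / det M)"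
    using cramer[OF assms] by blast
  then have "x $ m = det(\<chi> i j. if j=m then axis l 1$i else M$i$j) / det M" by simp
  moreover have "x $ m = matrix_inv M $ m $ l"
    unfolding x_def by (simp add: matrix_vector_mult_def axis_def if_distrib cong: if_cong)
  ultimately show ?thesis by (simp add: axis_def)
qed

lemma differentiable_prod':
  fixes f :: "'i \<Rightarrow> 'a::real_normed_vector \<Rightarrow> 'b::real_normed_field"
  assumes "\<And>i. i \<in> I \<Longrightarrow> f i differentiable (at x)"
  shows "(\<lambda>x. \<Prod>i\<in>I. f i x) differentiable (at x)"
proof -
  from assms obtain f' where "\<And>i. i \<in> I \<Longrightarrow> (f i has_derivative f' i) (at x)"
    unfolding differentiable_def by metis
  then show ?thesis unfolding differentiable_def by (blast intro: has_derivative_prod)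
qed

lemma det_differentiable:
  fixes F :: "'a::real_normed_vector \<Rightarrow> real^'n^'n"
  assumes "\<And>i j. (\<lambda>x. F x $ i $ j) differentiable (at x)"
  shows "(\<lambda>x. det (F x)) differentiable (at x)"
  unfolding det_def
  by (intro differentiable_sum ballI differentiable_mult differentiable_const differentiable_prod' assms)
    (simp_all add: finite_permutations)

lemma bl_entry: "bounded_linear (\<lambda>x::real^'n^'m. x $ i $ j)"
  using bounded_linear_compose[OF bounded_linear_vec_nth[of j] bounded_linear_vec_nth[of i]] by simp

lemma entry_has_derivative: "((\<lambda>x::real^'n^'m. x $ i $ j) has_derivative (\<lambda>x. x $ i $ j)) F"
  by (rule bounded_linear.has_derivative[OF bl_entry has_derivative_ident])

lemma continuous_det: "continuous_on UNIV (det :: real^'n^'n \<Rightarrow> real)"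
proof -
  have "\<And>x. (\<lambda>x::real^'n^'n. det x) differentiable (at x)"
    by (rule det_differentiable[of "\<lambda>x. x", simplified])
       (rule bounded_linear_imp_differentiable[OF bl_entry])
  then show ?thesis
    by (simp add: continuous_at_imp_continuous_on differentiable_imp_continuous_within)
qed

lemma open_det_nz: "open {M::real^'n^'n. det M \<noteq> 0}"
  by (rule open_Collect_neq[OF continuous_det continuous_on_const])

lemma has_derivative_matmul_entry:
  fixes F :: "'a::real_normed_vector \<Rightarrow> real^'n^'m" and G :: "'a \<Rightarrow> real^'p^'n"
  assumes "\<And>i j. ((\<lambda>x. F x $ i $ j) has_derivative (\<lambda>h. F' h $ i $ j)) (at x)"
    "\<And>i j. ((\<lambda>x. G x $ i $ j) has_derivative (\<lambda>h. G' h $ i $ j)) (at x)"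
  shows "((\<lambda>x. (F x ** G x) $ i $ j) has_derivative (\<lambda>h. (F' h ** G x + F x ** G' h) $ i $ j)) (at x)"
proof -
  have "((\<lambda>x. \<Sum>k\<in>UNIV. F x$i$k * G x$k$j) has_derivative
        (\<lambda>h. \<Sum>k\<in>UNIV. F x$i$k * G' h$k$j + F' h$i$k * G x$k$j)) (at x)"
    by (intro has_derivative_sum has_derivative_mult assms)
  then show ?thesis
    by (simp add: matrix_matrix_mult_def sum.distrib add.commute)
qed

lemma inv_entry_differentiable:
  fixes M :: "real^'n^'n"
  assumes "det M \<noteq> 0"
  shows "(\<lambda>N. matrix_inv N $ m $ l) differentiable (at M)"
proof -
  let ?g = "\<lambda>N::real^'n^'n. det (\<chi> i j. if j = m then axis l 1 $ i else N$i$j) / det N"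
  have "?g differentiable (at M)"
  proof (rule differentiable_divide)
    show "(\<lambda>N::real^'n^'n. det (\<chi> i j. if j = m then axis l 1 $ i else N$i$j)) differentiable (at M)"
    proof (rule det_differentiable)
      fix i j show "(\<lambda>N::real^'n^'n. (\<chi> i j. if j = m then axis l 1 $ i else N$i$j) $ i $ j) differentiable (at M)"
        by (cases "j = m") (auto intro: bounded_linear_imp_differentiable[OF bl_entry])
    qed
    show "(\<lambda>N::real^'n^'n. det N) differentiable (at M)"
      by (rule det_differentiable[of "\<lambda>x. x", simplified])
       (rule bounded_linear_imp_differentiable[OF bl_entry])
  qed (fact assms)
  then obtain g' where g': "(?g has_derivative g') (at M)" unfolding differentiable_def by blast
  have "((\<lambda>N. matrix_inv N $ m $ l) has_derivative g') (at M)"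
    by (rule has_derivative_transform_within_open[OF g' open_det_nz])
       (use assms in \<open>auto simp: matrix_inv_cramer\<close>)
  then show ?thesis unfolding differentiable_def by blast
qed

lemma matrix_mul_neg_right: "(A::real^'n^'m) ** (- B :: real^'p^'n) = - (A ** B)"
  by (simp add: matrix_matrix_mult_def vec_eq_iff sum_negf)

lemma inv_entry_has_derivative:
  fixes M :: "real^'n^'n"
  assumes "det M \<noteq> 0"
  shows "((\<lambda>N. matrix_inv N $ m $ l) has_derivative (\<lambda>H. - (matrix_inv M ** H ** matrix_inv M) $ m $ l)) (at M)"
proof -
  let ?B = "matrix_inv M"
  have inv: "invertible M" using assms by (simp add: invertible_det_nz)
  have "\<forall>m l. \<exists>D. ((\<lambda>N. matrix_inv N $ m $ l) has_derivative D) (at M)"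
    using inv_entry_differentiable[OF assms] unfolding differentiable_def by blast
  then obtain D where D: "\<And>m l. ((\<lambda>N. matrix_inv N $ m $ l) has_derivative D m l) (at M)"
    by metis
  define Dm where "Dm H = (\<chi> m l. D m l H)" for H
  have D': "((\<lambda>N. matrix_inv N $ m $ l) has_derivative (\<lambda>H. Dm H $ m $ l)) (at M)" for m l
    using D by (simp add: Dm_def)
  have prod: "((\<lambda>N. (N ** matrix_inv N) $ i $ j) has_derivative (\<lambda>H. (H ** ?B + M ** Dm H) $ i $ j)) (at M)" for i j
    by (rule has_derivative_matmul_entry[of "\<lambda>x. x" "\<lambda>x. x", OF entry_has_derivative D'])
  have const: "((\<lambda>N::real^'n^'n. (N ** matrix_inv N) $ i $ j) has_derivative (\<lambda>H. 0)) (at M)" for i j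
  proof (rule has_derivative_transform_within_open[OF has_derivative_const[of "mat 1 $ i $ j"] open_det_nz])
    show "M \<in> {M. det M \<noteq> 0}" using assms by simp
    fix N :: "real^'n^'n" assume "N \<in> {M. det M \<noteq> 0}"
    then have "invertible N" by (simp add: invertible_det_nz)
    then show "mat 1 $ i $ j = (N ** matrix_inv N) $ i $ j" by (simp add: matrix_inv_props)
  qed
  have eq0: "H ** ?B + M ** Dm H = 0" for H
  proof -
    have "(\<lambda>H. (H ** ?B + M ** Dm H) $ i $ j) = (\<lambda>H. 0)" for i j
      by (rule has_derivative_unique[OF prod const])
    then show ?thesis by (simp add: vec_eq_iff fun_eq_iff)
  qed
  have "Dm H = - (?B ** H ** ?B)" for H
  proof -
    have "M ** Dm H = - (H ** ?B)" using eq0[of H] by (simp add: eq_neg_iff_add_eq_0 add.commute)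
    then have "?B ** (M ** Dm H) = ?B ** (- (H ** ?B))" by simp
    then show ?thesis
      by (simp add: matrix_mul_assoc matrix_inv_props[OF inv] matrix_mul_lid matrix_mul_neg_right)
  qed
  then show ?thesis using D' by simp
qed



definition Ax :: "('p::finite, 'r::finite) mat \<Rightarrow> real^'p^'p" where
  "Ax X = blk0 X - blk1 X"

definition Bi :: "('p::finite, 'r::finite) mat \<Rightarrow> real^'p^'p" where
  "Bi X = matrix_inv (Ax X)"

lemma quad_transpose: "v \<bullet> ((transpose A ** A) *v v) = (A *v v) \<bullet> ((A::real^'n^'m) *v v)"
  by (metis dot_lmul_matrix matrix_vector_mul_assoc vector_transpose_matrix)

lemma blk_mulv:
  "blk0 X *v v = blk0 X *v v" by simp

lemma U_det:
  fixes X :: "('p::finite, 'r::finite) mat"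
  assumes "X \<in> U_ps"
  shows "det (Ax X) \<noteq> 0"
proof -
  have "inj ((*v) (Ax X))"
    unfolding vec.inj_iff_eq_0
  proof (intro allI impI)
    fix v assume Av: "Ax X *v v = 0"
    show "v = 0"
    proof (rule ccontr)
      assume "v \<noteq> 0"
      then have neg: "v \<bullet> ((- (transpose (blk0 X) ** blk0 X) + transpose (blk1 X) ** blk1 X
                       + transpose (blk2 X) ** blk2 X + transpose (blk3 X) ** blk3 X) *v v) < 0"
        using assms unfolding U_ps_def neg_def_def by blast
      have e: "blk0 X *v v = blk1 X *v v"
        using Av by (simp add: Ax_def matrix_vector_mult_diff_rdistrib)
      have "(- (transpose (blk0 X) ** blk0 X)) *v v = - ((transpose (blk0 X) ** blk0 X) *v v)"
        by (simp add: matrix_vector_mult_def vec_eq_iff sum_negf)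
      then have "v \<bullet> ((- (transpose (blk0 X) ** blk0 X) + transpose (blk1 X) ** blk1 X
                       + transpose (blk2 X) ** blk2 X + transpose (blk3 X) ** blk3 X) *v v)
           = (blk2 X *v v) \<bullet> (blk2 X *v v) + (blk3 X *v v) \<bullet> (blk3 X *v v)"
        by (simp add: matrix_vector_mult_add_rdistrib matrix_vector_mult_diff_rdistrib inner_add_right inner_diff_right quad_transpose e)
      also have "\<dots> \<ge> 0" by simp
      finally show False using neg by simp
    qed
  qed
  then obtain B where "B ** Ax X = mat 1" using matrix_left_invertible_injective by blast
  then have "invertible (Ax X)" unfolding invertible_def using matrix_left_right_inverse by blast
  then show ?thesis by (simp add: invertible_det_nz)
qed

lemma Phi_alt: "Phi X k l = complex_of_real ((blk2 X ** Bi X) $ k $ l) + \<i> * complex_of_real ((blk3 X ** Bi X) $ k $ l)"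
  unfolding Phi_def Let_def Bi_def Ax_def
  by (simp add: matrix_matrix_mult_def sum_distrib_left distrib_right sum.distrib mult.assoc)

lemma blk_mul:
  fixes X :: "('p::finite, 'r::finite) mat" and g :: "real^'p^'p"
  shows "blk0 (X ** g) = blk0 X ** g" "blk1 (X ** g) = blk1 X ** g"
    "blk2 (X ** g) = blk2 X ** g" "blk3 (X ** g) = blk3 X ** g"
  by (simp_all add: blk0_def blk1_def blk2_def blk3_def matrix_matrix_mult_def vec_eq_iff)

lemma Ax_mul: "Ax (X ** g) = Ax X ** g"
  unfolding Ax_def blk_mul by (simp add: matrix_matrix_mult_def vec_eq_iff sum_subtractf left_diff_distrib)

lemma Phi_GL:
  fixes X :: "('p::finite, 'r::finite) mat" and g :: "real^'p^'p"
  assumes "det (Ax X) \<noteq> 0" "invertible g"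
  shows "Phi (X ** g) k l = Phi X k l"
proof -
  have iA: "invertible (Ax X)" using assms by (simp add: invertible_det_nz)
  have "Bi (X ** g) = matrix_inv g ** Bi X"
    unfolding Bi_def Ax_mul
  proof (rule matrix_inv_unique)
    show "Ax X ** g ** (matrix_inv g ** matrix_inv (Ax X)) = mat 1"
      by (metis iA assms(2) matrix_inv_props matrix_mul_assoc matrix_mul_rid)
    show "matrix_inv g ** matrix_inv (Ax X) ** (Ax X ** g) = mat 1"
      by (metis iA assms(2) matrix_inv_props matrix_mul_assoc matrix_mul_rid)
  qed
  then have "blk2 (X ** g) ** Bi (X ** g) = blk2 X ** Bi X" "blk3 (X ** g) ** Bi (X ** g) = blk3 X ** Bi X"
    by (metis assms(2) blk_mul matrix_inv_props(1) matrix_mul_assoc matrix_mul_lid)+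
  then show ?thesis by (simp add: Phi_alt)
qed

lemma line_has_derivative: "((\<lambda>t::real. Y + t *\<^sub>R E) has_derivative (\<lambda>t. t *\<^sub>R E)) F"
  by (auto intro!: derivative_eq_intros)

lemma line_vd:
  assumes "(\<phi> has_derivative \<phi>') (at Y)"
  shows "((\<lambda>t. \<phi> (Y + t *\<^sub>R E)) has_vector_derivative \<phi>' E) (at 0)"
proof -
  have "((\<lambda>t. \<phi> (Y + t *\<^sub>R E)) has_derivative (\<lambda>t. \<phi>' (t *\<^sub>R E))) (at 0)"
    by (rule has_derivative_compose[OF line_has_derivative]) (simp add: assms)
  moreover have "(\<lambda>t. \<phi>' (t *\<^sub>R E)) = (\<lambda>t. t *\<^sub>R \<phi>' E)"
    using linear_cmul[OF has_derivative_linear[OF assms]] by auto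
  ultimately show ?thesis by (simp add: has_vector_derivative_def)
qed

lemma pd_eq:
  fixes \<phi> :: "real^'c::finite^'m::finite \<Rightarrow> complex"
  assumes "(\<phi> has_derivative \<phi>') (at Y)"
  shows "pd a j \<phi> Y = \<phi>' (unitmat a j)"
  unfolding pd_def by (rule vector_derivative_at[OF line_vd[OF assms]])

lemma deriv_invariant_zero:
  assumes "(\<phi> has_derivative \<phi>') (at Y)" "\<And>t. \<phi> (Y + t *\<^sub>R d) = \<phi> Y"
  shows "\<phi>' d = 0"
proof -
  have "((\<lambda>t. \<phi> (Y + t *\<^sub>R d)) has_vector_derivative \<phi>' d) (at 0)" by (rule line_vd[OF assms(1)])
  moreover have "((\<lambda>t. \<phi> (Y + t *\<^sub>R d)) has_vector_derivative 0) (at 0)"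
    by (simp add: assms(2))
  ultimately show ?thesis using vector_derivative_unique_at by blast
qed

lemma bl_Ax: "bounded_linear (Ax :: ('p::finite, 'r::finite) mat \<Rightarrow> _)"
proof -
  have "linear (Ax :: ('p::finite, 'r::finite) mat \<Rightarrow> _)"
    by (rule linearI) (simp_all add: Ax_def blk0_def blk1_def vec_eq_iff algebra_simps)
  then show ?thesis by (simp add: linear_conv_bounded_linear)
qed

lemma Ax_has_derivative: "(Ax has_derivative Ax) F"
  by (rule bounded_linear.has_derivative[OF bl_Ax has_derivative_ident])

lemma blk2_entry_der: "((\<lambda>Y. blk2 Y $ i $ j) has_derivative (\<lambda>H. blk2 H $ i $ j)) F"
  unfolding blk2_def by (simp add: entry_has_derivative)

lemma blk3_entry_der: "((\<lambda>Y. blk3 Y $ i $ j) has_derivative (\<lambda>H. blk3 H $ i $ j)) F"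
  unfolding blk3_def by (simp add: entry_has_derivative)

lemma Bi_entry_der:
  fixes X :: "('p::finite, 'r::finite) mat"
  assumes "det (Ax X) \<noteq> 0"
  shows "((\<lambda>Y. Bi Y $ m $ l) has_derivative (\<lambda>H. (- (Bi X ** Ax H ** Bi X)) $ m $ l)) (at X)"
  unfolding Bi_def
  using has_derivative_compose[OF Ax_has_derivative inv_entry_has_derivative[OF assms, of m l]]
  by simp

definition Df :: "'r \<Rightarrow> 'p \<Rightarrow> ('p::finite, 'r::finite) mat \<Rightarrow> ('p, 'r) mat \<Rightarrow> complex" where
  "Df k l X H = complex_of_real ((blk2 H ** Bi X + blk2 X ** (- (Bi X ** Ax H ** Bi X))) $ k $ l)
     + \<i> * complex_of_real ((blk3 H ** Bi X + blk3 X ** (- (Bi X ** Ax H ** Bi X))) $ k $ l)"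

lemma Phi_der:
  fixes X :: "('p::finite, 'r::finite) mat"
  assumes "det (Ax X) \<noteq> 0"
  shows "((\<lambda>Y. Phi Y k l) has_derivative Df k l X) (at X)"
proof -
  have R2: "((\<lambda>Y. (blk2 Y ** Bi Y) $ k $ l) has_derivative
      (\<lambda>H. (blk2 H ** Bi X + blk2 X ** (- (Bi X ** Ax H ** Bi X))) $ k $ l)) (at X)"
    by (rule has_derivative_matmul_entry[OF blk2_entry_der Bi_entry_der[OF assms]])
  have R3: "((\<lambda>Y. (blk3 Y ** Bi Y) $ k $ l) has_derivative
      (\<lambda>H. (blk3 H ** Bi X + blk3 X ** (- (Bi X ** Ax H ** Bi X))) $ k $ l)) (at X)"
    by (rule has_derivative_matmul_entry[OF blk3_entry_der Bi_entry_der[OF assms]])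
  show ?thesis unfolding Phi_alt[abs_def] Df_def[abs_def]
    by (intro has_derivative_add has_derivative_of_real has_derivative_mult_right R2 R3)
qed

definition ediff :: "('a::real_normed_vector \<Rightarrow> real^'n^'m) \<Rightarrow> 'a \<Rightarrow> bool" where
  "ediff F x \<longleftrightarrow> (\<forall>i j. (\<lambda>y. F y $ i $ j) differentiable (at x))"

lemma ediff_const: "ediff (\<lambda>y. C) x" by (simp add: ediff_def)

lemma ediff_mult:
  assumes "ediff F x" "ediff G x"
  shows "ediff (\<lambda>y. F y ** G y) x"
  using assms unfolding ediff_def matrix_matrix_mult_def
  by (auto intro!: differentiable_sum differentiable_mult)

lemma ediff_add:
  assumes "ediff F x" "ediff G x"
  shows "ediff (\<lambda>y. F y + G y) x"
  using assms unfolding ediff_def by (auto intro!: differentiable_add)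

lemma ediff_neg:
  assumes "ediff F x"
  shows "ediff (\<lambda>y. - F y) x"
  using assms unfolding ediff_def by (auto intro!: differentiable_minus)

lemma ediff_Bi: "det (Ax X) \<noteq> 0 \<Longrightarrow> ediff Bi X"
  unfolding ediff_def differentiable_def using Bi_entry_der by blast

lemma ediff_blk2: "ediff blk2 X"
  unfolding ediff_def differentiable_def using blk2_entry_der by blast

lemma ediff_blk3: "ediff blk3 X"
  unfolding ediff_def differentiable_def using blk3_entry_der by blast

lemma differentiable_of_real':
  "(g :: _ \<Rightarrow> real) differentiable F \<Longrightarrow> (\<lambda>x. complex_of_real (g x)) differentiable F"
  unfolding differentiable_def using has_derivative_of_real by blast

lemma Df_diff:
  fixes X :: "('p::finite, 'r::finite) mat"
  assumes "det (Ax X) \<noteq> 0"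
  shows "(\<lambda>Y. Df k l Y H) differentiable (at X)"
proof -
  have "ediff (\<lambda>Y. blk2 H ** Bi Y + blk2 Y ** (- (Bi Y ** Ax H ** Bi Y))) X"
    "ediff (\<lambda>Y. blk3 H ** Bi Y + blk3 Y ** (- (Bi Y ** Ax H ** Bi Y))) X"
    using ediff_Bi[OF assms] ediff_blk2[of X] ediff_blk3[of X]
    by (intro ediff_add ediff_mult ediff_neg ediff_const; simp)+
  then show ?thesis unfolding Df_def ediff_def
    by (intro differentiable_add differentiable_mult differentiable_const differentiable_of_real') auto
qed

lemma open_V: "open {X :: ('p::finite, 'r::finite) mat. det (Ax X) \<noteq> 0}"
proof -
  have "continuous_on UNIV (\<lambda>X :: ('p, 'r) mat. det (Ax X))"
    by (rule continuous_on_compose2[OF continuous_det linear_continuous_on[OF bl_Ax]]) auto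
  then show ?thesis by (rule open_Collect_neq[OF _ continuous_on_const])
qed

lemma pd_Phi:
  fixes Y :: "('p::finite, 'r::finite) mat"
  assumes "det (Ax Y) \<noteq> 0"
  shows "pd a j (\<lambda>Y. Phi Y k l) Y = Df k l Y (unitmat a j)"
  by (rule pd_eq[OF Phi_der[OF assms]])

lemma pd_Phi_has_derivative:
  fixes X :: "('p::finite, 'r::finite) mat"
  assumes "det (Ax X) \<noteq> 0"
  obtains D where "(pd a j (\<lambda>Y. Phi Y k l) has_derivative D) (at X)"
    "((\<lambda>Y. Df k l Y (unitmat a j)) has_derivative D) (at X)"
proof -
  obtain D where D: "((\<lambda>Y. Df k l Y (unitmat a j)) has_derivative D) (at X)"
    using Df_diff[OF assms] unfolding differentiable_def by blast
  have "(pd a j (\<lambda>Y. Phi Y k l) has_derivative D) (at X)"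
    by (rule has_derivative_transform_within_open[OF D open_V]) (use assms in \<open>auto simp: pd_Phi\<close>)
  with D show ?thesis using that by blast
qed

lemma matrix_mul_neg_left: "(- A :: real^'n^'m) ** (B :: real^'p^'n) = - (A ** B)"
  by (simp add: matrix_matrix_mult_def vec_eq_iff sum_negf)

lemma unit_blk:
  fixes i :: "'p::finite" and j :: 'p and m :: "'r::finite"
  shows "blk2 (unitmat (Inl (Inl i)) j :: ('p, 'r) mat) = 0"
    "blk3 (unitmat (Inl (Inl i)) j :: ('p, 'r) mat) = 0"
    "blk2 (unitmat (Inl (Inr i)) j :: ('p, 'r) mat) = 0"
    "blk3 (unitmat (Inl (Inr i)) j :: ('p, 'r) mat) = 0"
    "Ax (unitmat (Inl (Inr i)) j :: ('p, 'r) mat) = - Ax (unitmat (Inl (Inl i)) j :: ('p, 'r) mat)"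
    "Ax (unitmat (Inr (Inl m)) j :: ('p, 'r) mat) = 0"
    "Ax (unitmat (Inr (Inr m)) j :: ('p, 'r) mat) = 0"
    "blk3 (unitmat (Inr (Inl m)) j :: ('p, 'r) mat) = 0"
    "blk2 (unitmat (Inr (Inr m)) j :: ('p, 'r) mat) = 0"
    "blk3 (unitmat (Inr (Inr m)) j :: ('p, 'r) mat) = blk2 (unitmat (Inr (Inl m)) j :: ('p, 'r) mat)"
  by (simp_all add: unitmat_def Ax_def blk0_def blk1_def blk2_def blk3_def vec_eq_iff)

lemma Df_E1:
  fixes Y :: "('p::finite, 'r::finite) mat"
  shows "Df k l Y (unitmat (Inl (Inr i)) j) = - Df k l Y (unitmat (Inl (Inl i)) j)"
  unfolding Df_def unit_blk
  by (simp add: matrix_mul_neg_left matrix_mul_neg_right)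

lemma Df_E2:
  fixes Y :: "('p::finite, 'r::finite) mat"
  shows "Df k l Y (unitmat (Inr (Inl m)) j) = complex_of_real ((blk2 (unitmat (Inr (Inl m)) j :: ('p, 'r) mat) ** Bi Y) $ k $ l)"
    "Df k l Y (unitmat (Inr (Inr m)) j) = \<i> * complex_of_real ((blk2 (unitmat (Inr (Inl m)) j :: ('p, 'r) mat) ** Bi Y) $ k $ l)"
  unfolding Df_def unit_blk
  by (simp_all add: times0_left times0_right)

lemma shift_inv:
  fixes Y :: "('p::finite, 'r::finite) mat"
  shows "Ax (Y + t *\<^sub>R (unitmat (Inl (Inl i)) j + unitmat (Inl (Inr i)) j)) = Ax Y"
    "blk2 (Y + t *\<^sub>R (unitmat (Inl (Inl i)) j + unitmat (Inl (Inr i)) j)) = blk2 Y"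
    "blk3 (Y + t *\<^sub>R (unitmat (Inl (Inl i)) j + unitmat (Inl (Inr i)) j)) = blk3 Y"
    "Ax (Y + t *\<^sub>R unitmat (Inr (Inl m)) j) = Ax Y"
    "Ax (Y + t *\<^sub>R unitmat (Inr (Inr m)) j) = Ax Y"
  by (simp_all add: unitmat_def Ax_def blk0_def blk1_def blk2_def blk3_def vec_eq_iff)

lemma sum_rowidx:
  fixes h :: "('p::finite, 'r::finite) rowidx \<Rightarrow> 'b::comm_monoid_add"
  shows "(\<Sum>a\<in>UNIV. h a) = (\<Sum>i\<in>UNIV. h (Inl (Inl i))) + (\<Sum>i\<in>UNIV. h (Inl (Inr i)))
      + (\<Sum>m\<in>UNIV. h (Inr (Inl m))) + (\<Sum>m\<in>UNIV. h (Inr (Inr m)))"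
  by (simp add: UNIV_Plus_UNIV[symmetric] sum.Plus del: UNIV_Plus_UNIV add: o_def add.assoc)

lemma pdd_E0E1:
  fixes X :: "('p::finite, 'r::finite) mat"
  assumes X: "det (Ax X) \<noteq> 0"
  shows "pd (Inl (Inr i)) j (pd (Inl (Inr i)) j (\<lambda>Y. Phi Y k l)) X
       = pd (Inl (Inl i)) j (pd (Inl (Inl i)) j (\<lambda>Y. Phi Y k l)) X"
proof -
  let ?E0 = "unitmat (Inl (Inl i)) j :: ('p, 'r) mat"
  let ?E1 = "unitmat (Inl (Inr i)) j :: ('p, 'r) mat"
  obtain D0 where D0: "(pd (Inl (Inl i)) j (\<lambda>Y. Phi Y k l) has_derivative D0) (at X)"
    "((\<lambda>Y. Df k l Y ?E0) has_derivative D0) (at X)"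
    using pd_Phi_has_derivative[OF X] by metis
  obtain D1 where D1: "(pd (Inl (Inr i)) j (\<lambda>Y. Phi Y k l) has_derivative D1) (at X)"
    "((\<lambda>Y. Df k l Y ?E1) has_derivative D1) (at X)"
    using pd_Phi_has_derivative[OF X] by metis
  have "((\<lambda>Y. Df k l Y ?E1) has_derivative (\<lambda>h. - D0 h)) (at X)"
    unfolding Df_E1 by (intro has_derivative_minus D0(2))
  with D1(2) have D10: "D1 = (\<lambda>h. - D0 h)" by (rule has_derivative_unique)
  have "D0 (?E0 + ?E1) = 0"
  proof (rule deriv_invariant_zero[OF D0(2)])
    fix t show "Df k l (X + t *\<^sub>R (?E0 + ?E1)) ?E0 = Df k l X ?E0"
      unfolding Df_def Bi_def shift_inv ..
  qed
  then have "D0 ?E1 = - D0 ?E0"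
    using linear_add[OF has_derivative_linear[OF D0(2)]] by (simp add: eq_neg_iff_add_eq_0 add.commute)
  then show ?thesis
    using pd_eq[OF D0(1)] pd_eq[OF D1(1)] D10 by simp
qed

lemma pdd_E23:
  fixes X :: "('p::finite, 'r::finite) mat"
  assumes X: "det (Ax X) \<noteq> 0"
  shows "pd (Inr (Inl m)) j (pd (Inr (Inl m)) j (\<lambda>Y. Phi Y k l)) X = 0"
    "pd (Inr (Inr m)) j (pd (Inr (Inr m)) j (\<lambda>Y. Phi Y k l)) X = 0"
proof -
  have "pd (Inr (Inl m)) j (\<lambda>Y. Phi Y k l) (X + t *\<^sub>R unitmat (Inr (Inl m)) j)
      = pd (Inr (Inl m)) j (\<lambda>Y. Phi Y k l) X" for t
    using X by (simp add: pd_Phi shift_inv Df_E2 Bi_def)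
  then show "pd (Inr (Inl m)) j (pd (Inr (Inl m)) j (\<lambda>Y. Phi Y k l)) X = 0"
    unfolding pd_def[of _ _ "pd _ _ _"] by (simp add: vector_derivative_at)
  have "pd (Inr (Inr m)) j (\<lambda>Y. Phi Y k l) (X + t *\<^sub>R unitmat (Inr (Inr m)) j)
      = pd (Inr (Inr m)) j (\<lambda>Y. Phi Y k l) X" for t
    using X by (simp add: pd_Phi shift_inv Df_E2 Bi_def)
  then show "pd (Inr (Inr m)) j (pd (Inr (Inr m)) j (\<lambda>Y. Phi Y k l)) X = 0"
    unfolding pd_def[of _ _ "pd _ _ _"] by (simp add: vector_derivative_at)
qed

lemma tau_Phi:
  fixes X :: "('p::finite, 'r::finite) mat"
  assumes X: "det (Ax X) \<noteq> 0"
  shows "tau (\<lambda>Y. Phi Y k l) X = 0"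
  unfolding tau_def
  by (subst sum_rowidx) (simp add: sgn_row_def pdd_E0E1[OF X] pdd_E23[OF X] sum_negf)

lemma kappa_Phi:
  fixes X :: "('p::finite, 'r::finite) mat"
  assumes X: "det (Ax X) \<noteq> 0"
  shows "kappa (\<lambda>Y. Phi Y k l) (\<lambda>Y. Phi Y k' l') X = 0"
  unfolding kappa_def
  by (subst sum_rowidx) (simp add: sgn_row_def pd_Phi[OF X] Df_E1 Df_E2 sum_negf algebra_simps)

theorem proposition5p2:
  fixes \<Omega> :: "(('p::finite, 'r::finite) mat \<Rightarrow> complex) set"
  assumes "\<Omega> = {(\<lambda>X. Phi X k l) | k l. True}"
  shows "orth_harm_family (U_ps :: ('p, 'r) mat set) \<Omega> \<and> (\<forall>f\<in>\<Omega>. GLp_invariant U_ps f)"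
proof -
  have diff: "(\<lambda>Y. Phi Y k l) differentiable (at X) \<and> (\<forall>a j. pd a j (\<lambda>Y. Phi Y k l) differentiable (at X))"
    if "X \<in> U_ps" for X :: "('p, 'r) mat" and k l
  proof -
    have X: "det (Ax X) \<noteq> 0" using U_det[OF that] .
    show ?thesis
    proof (intro conjI allI)
      show "(\<lambda>Y. Phi Y k l) differentiable (at X)"
        using Phi_der[OF X] unfolding differentiable_def by blast
      fix a j
      obtain D where "(pd a j (\<lambda>Y. Phi Y k l) has_derivative D) (at X)"
        using pd_Phi_has_derivative[OF X] by metis
      then show "pd a j (\<lambda>Y. Phi Y k l) differentiable (at X)"
        unfolding differentiable_def by blast
    qed
  qed
  show ?thesis
    unfolding orth_harm_family_def GLp_invariant_def assms
    using diff tau_Phi kappa_Phi U_det Phi_GL by fastforce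
qed

end
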